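(* Let $\phi:\mathbb N\setminus\{0\}\to\mathbb N\setminus\{0\}$ satisfy $\phi(n)/n\to0$. Let $(Z_i)$ be i.i.d. $\mathbb R^d$-valued random variables with $Z_1$ satisfying (A1) and (A2). Then $\bar Z_n^\phi=\frac1n\sum_{i=1}^{\phi(n)}Z_i$ satisfies the LDP in $\mathbb R^d$ with good rate function $I(y)=\Delta^*(y\mid\mathcal D_Z)$.
   Context: $\Delta^*(y\mid A)=\sup_{\theta\in A}\langle y,\theta\rangle$. $\mathcal D_Z=\{\theta\in\mathbb R^d:\log\mathbb E\,e^{\langle\theta,Z_1\rangle}<\infty\}$. (A1): $\mathbb E\,e^{\alpha|Z_1|}<\infty$ for some $\alpha>0$ and $Z_1/n$ satisfies the LDP with a good rate function $I$. (A2): $I(z)=\Delta^*(z\mid\mathcal D_Z)$. *)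

theory Defs
  imports "HOL-Probability.Probability"
begin

definition eln :: "real \<Rightarrow> ereal" where
  "eln p = (if p > 0 then ereal (ln p) else -\<infinity>)"

definition good_rate_function :: "('a::topological_space \<Rightarrow> ereal) \<Rightarrow> bool" where
  "good_rate_function I \<longleftrightarrow> (\<forall>x. 0 \<le> I x) \<and> (\<forall>c::real. compact {x. I x \<le> ereal c})"

definition LDP :: "(nat \<Rightarrow> 'a::topological_space measure) \<Rightarrow> ('a \<Rightarrow> ereal) \<Rightarrow> bool" where
  "LDP \<mu> I \<longleftrightarrow>
     (\<forall>F. closed F \<longrightarrow>
        limsup (\<lambda>n. ereal (1 / real n) * eln (measure (\<mu> n) F)) \<le> - (INF x\<in>F. I x)) \<and>
     (\<forall>G. open G \<longrightarrow>
        - (INF x\<in>G. I x) \<le> liminf (\<lambda>n. ereal (1 / real n) * eln (measure (\<mu> n) G)))"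

definition support_fun :: "'a::real_inner \<Rightarrow> 'a set \<Rightarrow> ereal" where
  "support_fun y A = (SUP \<theta>\<in>A. ereal (y \<bullet> \<theta>))"

definition mgf_domain :: "'s measure \<Rightarrow> ('s \<Rightarrow> 'a::real_inner) \<Rightarrow> 'a set" where
  "mgf_domain M X = {\<theta>. (\<integral>\<^sup>+ \<omega>. ennreal (exp (\<theta> \<bullet> X \<omega>)) \<partial>M) < \<infinity>}"

end

theory Submission
  imports Defs
begin

lemma growth:
  fixes \<phi> :: "nat \<Rightarrow> nat"
  assumes lim: "(\<lambda>n. real (\<phi> n) / real n) \<longlonglongrightarrow> 0" and K: "K \<ge> 1" and e: "\<epsilon> > 0"
  shows "eventually (\<lambda>n. K ^ \<phi> n \<le> exp (real n * \<epsilon>)) sequentially"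
proof -
  have "(\<lambda>n. real (\<phi> n) / real n * ln K) \<longlonglongrightarrow> 0"
    by (rule tendsto_mult_left_zero[OF lim])
  then have "eventually (\<lambda>n. real (\<phi> n) / real n * ln K < \<epsilon>) sequentially"
    using e by (rule order_tendstoD)
  moreover have "eventually (\<lambda>n. n > (0::nat)) sequentially"
    by (rule eventually_gt_at_top)
  ultimately show ?thesis
  proof eventually_elim
    case (elim n)
    have "K ^ \<phi> n = exp (real (\<phi> n) * ln K)"
      using K by (simp add: exp_of_nat_mult)
    also have "real (\<phi> n) * ln K = real n * (real (\<phi> n) / real n * ln K)"
      using elim by simp
    also have "\<dots> \<le> real n * \<epsilon>"
      using elim by (intro mult_left_mono) auto
    finally show ?case by simp
  qed
qed

lemma expdom:
  assumes "a > b"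
  shows "eventually (\<lambda>n. N * exp (- (real n * a)) \<le> exp (- (real n * b))) sequentially"
proof -
  have "(\<lambda>n. exp (- (a - b)) ^ n) \<longlonglongrightarrow> 0"
    using assms by (intro LIMSEQ_power_zero) auto
  then have "(\<lambda>n. N * exp (- (a - b)) ^ n) \<longlonglongrightarrow> 0"
    by (rule tendsto_mult_right_zero)
  then have "eventually (\<lambda>n. N * exp (- (a - b)) ^ n < 1) sequentially"
    by (rule order_tendstoD) simp
  then show ?thesis
  proof eventually_elim
    case (elim n)
    have "exp (- (a - b)) ^ n = exp (- (real n * a)) / exp (- (real n * b))"
      by (simp add: exp_of_nat_mult[symmetric] exp_diff[symmetric] algebra_simps)
    then have "N * exp (- (real n * a)) / exp (- (real n * b)) < 1"
      using elim by simp
    then show ?case by (simp add: divide_simps)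
  qed
qed

lemma ub_conv:
  fixes P :: "nat \<Rightarrow> real" and x :: ereal
  assumes H: "\<And>c. ereal c < x \<Longrightarrow> eventually (\<lambda>n. P n \<le> exp (- (real n * c))) sequentially"
  shows "limsup (\<lambda>n. ereal (1 / real n) * eln (P n)) \<le> - x"
proof (rule ccontr)
  assume "\<not> ?thesis"
  then have "- x < limsup (\<lambda>n. ereal (1 / real n) * eln (P n))" by (simp only: not_le)
  then have lt: "- limsup (\<lambda>n. ereal (1 / real n) * eln (P n)) < x" by (rule ereal_uminus_less_reorder[THEN iffD1])
  obtain c where c1: "- limsup (\<lambda>n. ereal (1 / real n) * eln (P n)) < ereal c" and c2: "ereal c < x"
    using ereal_dense2[OF lt] by blast
  have "eventually (\<lambda>n. ereal (1 / real n) * eln (P n) \<le> ereal (- c)) sequentially"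
    using H[OF c2] eventually_gt_at_top[of "0::nat"]
  proof eventually_elim
    case (elim n)
    show ?case
    proof (cases "P n > 0")
      case True
      then have "ln (P n) \<le> ln (exp (- (real n * c)))" using elim by (subst ln_le_cancel_iff) auto

      then have "ln (P n) \<le> - (real n * c)" by simp
      then have "ln (P n) / real n \<le> (- (real n * c)) / real n"
        by (rule divide_right_mono) simp
      then have "ln (P n) / real n \<le> - c"
        using elim by simp
      then show ?thesis using True elim by (simp add: eln_def)
    next
      case False
      then show ?thesis using elim by (simp add: eln_def)
    qed
  qed
  then have a: "limsup (\<lambda>n. ereal (1 / real n) * eln (P n)) \<le> ereal (- c)"
    by (rule Limsup_bounded)
  have "- ereal c < limsup (\<lambda>n. ereal (1 / real n) * eln (P n))"
    using c1 by (rule ereal_uminus_less_reorder[THEN iffD1])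
  then have b: "ereal (- c) < limsup (\<lambda>n. ereal (1 / real n) * eln (P n))"
    by (simp only: uminus_ereal.simps(1))
  show False using a b leD by blast
qed

lemma lb_conv:
  fixes P :: "nat \<Rightarrow> real" and x :: ereal
  assumes H: "\<And>c. x < ereal c \<Longrightarrow> eventually (\<lambda>n. exp (- (real n * c)) \<le> P n) sequentially"
  shows "- x \<le> liminf (\<lambda>n. ereal (1 / real n) * eln (P n))"
proof (rule ccontr)
  assume "\<not> ?thesis"
  then have "liminf (\<lambda>n. ereal (1 / real n) * eln (P n)) < - x" by (simp only: not_le)
  then have lt: "x < - liminf (\<lambda>n. ereal (1 / real n) * eln (P n))"
    by (rule ereal_less_uminus_reorder[THEN iffD1])
  obtain c where c1: "ereal c < - liminf (\<lambda>n. ereal (1 / real n) * eln (P n))" and c2: "x < ereal c"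
    using ereal_dense2[OF lt] by blast
  have "eventually (\<lambda>n. ereal (- c) \<le> ereal (1 / real n) * eln (P n)) sequentially"
    using H[OF c2] eventually_gt_at_top[of "0::nat"]
  proof eventually_elim
    case (elim n)
    have P: "P n > 0" using elim(1) by (rule less_le_trans[rotated]) simp
    then have "- (real n * c) \<le> ln (P n)"
      using elim by (subst ln_ge_iff) auto
    then have "(- (real n * c)) / real n \<le> ln (P n) / real n"
      by (rule divide_right_mono) simp
    then have "- c \<le> ln (P n) / real n"
      using elim by simp
    then show ?case using P by (simp add: eln_def)
  qed
  then have a: "ereal (- c) \<le> liminf (\<lambda>n. ereal (1 / real n) * eln (P n))"
    by (rule Liminf_bounded)
  have "liminf (\<lambda>n. ereal (1 / real n) * eln (P n)) < - ereal c"
    using c1 by (rule ereal_less_uminus_reorder[THEN iffD1])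
  then have b: "liminf (\<lambda>n. ereal (1 / real n) * eln (P n)) < ereal (- c)"
    by (simp only: uminus_ereal.simps(1))
  show False using a b leD by blast
qed

context prob_space begin

lemma cheb:
  fixes Z :: "nat \<Rightarrow> 'a \<Rightarrow> 'b::euclidean_space" and f :: "'b \<Rightarrow> real"
  assumes indep: "indep_vars (\<lambda>_. borel) Z {1..}"
    and ident: "\<forall>i\<ge>1. distr M borel (Z i) = distr M borel (Z 1)"
    and f: "f \<in> borel_measurable borel"
    and L: "(\<integral>\<^sup>+\<omega>. ennreal (exp (f (Z 1 \<omega>))) \<partial>M) < \<infinity>"
    and J: "finite J" "J \<subseteq> {1..}"
  shows "prob {\<omega>\<in>space M. t \<le> (\<Sum>i\<in>J. f (Z i \<omega>))}
     \<le> (enn2real (\<integral>\<^sup>+\<omega>. ennreal (exp (f (Z 1 \<omega>))) \<partial>M)) ^ card J * exp (-t)"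
proof -
  define Lv where "Lv = (\<integral>\<^sup>+\<omega>. ennreal (exp (f (Z 1 \<omega>))) \<partial>M)"
  have meas: "\<And>i. i \<in> {1..} \<Longrightarrow> Z i \<in> borel_measurable M"
    using indep by (auto simp: indep_vars_def)
  have eqL: "(\<integral>\<^sup>+\<omega>. ennreal (exp (f (Z i \<omega>))) \<partial>M) = Lv" if "i \<ge> 1" for i
  proof -
    have "(\<integral>\<^sup>+\<omega>. ennreal (exp (f (Z i \<omega>))) \<partial>M) = (\<integral>\<^sup>+x. ennreal (exp (f x)) \<partial>distr M borel (Z i))"
      using meas[of i] that f by (subst nn_integral_distr) auto
    also have "\<dots> = (\<integral>\<^sup>+x. ennreal (exp (f x)) \<partial>distr M borel (Z 1))"
      using ident[rule_format, OF that] by simp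
    also have "\<dots> = Lv"
      unfolding Lv_def using meas[of 1] f by (subst nn_integral_distr) auto
    finally show ?thesis .
  qed
  have ind2: "indep_vars (\<lambda>_. borel) (\<lambda>i \<omega>. ennreal (exp (f (Z i \<omega>)))) J"
    using indep_vars_compose2[OF indep_vars_subset[OF indep J(2)], of "\<lambda>_ z. ennreal (exp (f z))" "\<lambda>_. borel"] f
    by auto
  have mJ: "(\<lambda>\<omega>. \<Sum>i\<in>J. f (Z i \<omega>)) \<in> borel_measurable M"
    using meas J f by (intro borel_measurable_sum) (auto intro: measurable_compose)
  have "emeasure M {\<omega>\<in>space M. t \<le> (\<Sum>i\<in>J. f (Z i \<omega>))}
      = (\<integral>\<^sup>+\<omega>. indicator {\<omega>\<in>space M. t \<le> (\<Sum>i\<in>J. f (Z i \<omega>))} \<omega> \<partial>M)"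
    using mJ by (subst nn_integral_indicator) auto
  also have "\<dots> \<le> (\<integral>\<^sup>+\<omega>. ennreal (exp (-t)) * (\<Prod>i\<in>J. ennreal (exp (f (Z i \<omega>)))) \<partial>M)"
  proof (intro nn_integral_mono)
    fix \<omega> assume "\<omega> \<in> space M"
    have "(\<Prod>i\<in>J. ennreal (exp (f (Z i \<omega>)))) = ennreal (\<Prod>i\<in>J. exp (f (Z i \<omega>)))"
      by (simp add: prod_ennreal)
    also have "\<dots> = ennreal (exp (\<Sum>i\<in>J. f (Z i \<omega>)))"
      using J by (simp add: exp_sum)
    finally have e: "ennreal (exp (-t)) * (\<Prod>i\<in>J. ennreal (exp (f (Z i \<omega>)))) = ennreal (exp ((\<Sum>i\<in>J. f (Z i \<omega>)) - t))"
      by (simp add: ennreal_mult[symmetric] exp_diff exp_minus field_simps)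
    show "indicator {\<omega>\<in>space M. t \<le> (\<Sum>i\<in>J. f (Z i \<omega>))} \<omega> \<le> ennreal (exp (-t)) * (\<Prod>i\<in>J. ennreal (exp (f (Z i \<omega>))))"
      unfolding e by (cases "t \<le> (\<Sum>i\<in>J. f (Z i \<omega>))") (auto simp: indicator_def)
  qed
  also have "\<dots> = ennreal (exp (-t)) * (\<integral>\<^sup>+\<omega>. (\<Prod>i\<in>J. ennreal (exp (f (Z i \<omega>)))) \<partial>M)"
  proof (rule nn_integral_cmult)
    have "(\<lambda>\<omega>. ennreal (exp (f (Z i \<omega>)))) \<in> borel_measurable M" if "i \<in> J" for i
      using meas[of i] that J f by (auto intro: measurable_compose)
    then show "(\<lambda>\<omega>. \<Prod>i\<in>J. ennreal (exp (f (Z i \<omega>)))) \<in> borel_measurable M"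
      by (rule borel_measurable_prod_ennreal)
  qed
  also have "(\<integral>\<^sup>+\<omega>. (\<Prod>i\<in>J. ennreal (exp (f (Z i \<omega>)))) \<partial>M) = (\<Prod>i\<in>J. Lv)"
  proof -
    have "(\<Prod>i\<in>J. \<integral>\<^sup>+\<omega>. ennreal (exp (f (Z i \<omega>))) \<partial>M) = (\<Prod>i\<in>J. Lv)"
      using eqL J(2) by (intro prod.cong) auto
    then show ?thesis using indep_vars_nn_integral[OF J(1) ind2] by simp
  qed
  also have "\<dots> = ennreal (enn2real Lv ^ card J)"
    using L unfolding Lv_def by (simp add: ennreal_power[symmetric])
  finally have "ennreal (prob {\<omega>\<in>space M. t \<le> (\<Sum>i\<in>J. f (Z i \<omega>))}) \<le> ennreal (enn2real Lv ^ card J * exp (-t))"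
    by (simp add: emeasure_eq_measure ennreal_mult mult.commute)
  then show ?thesis unfolding Lv_def
    by (subst (asm) ennreal_le_iff) auto
qed


lemma cheb2:
  fixes Z :: "nat \<Rightarrow> 'a \<Rightarrow> 'b::euclidean_space" and f :: "'b \<Rightarrow> real"
  assumes indep: "indep_vars (\<lambda>_. borel) Z {1..}"
    and ident: "\<forall>i\<ge>1. distr M borel (Z i) = distr M borel (Z 1)"
    and f: "f \<in> borel_measurable borel"
    and L: "(\<integral>\<^sup>+\<omega>. ennreal (exp (f (Z 1 \<omega>))) \<partial>M) < \<infinity>"
    and J: "finite J" "J \<subseteq> {1..}"
    and A: "A \<subseteq> {\<omega>\<in>space M. t \<le> (\<Sum>i\<in>J. f (Z i \<omega>))}"
  shows "prob A \<le> (enn2real (\<integral>\<^sup>+\<omega>. ennreal (exp (f (Z 1 \<omega>))) \<partial>M)) ^ card J * exp (-t)"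
proof -
  have meas: "\<And>i. i \<in> {1..} \<Longrightarrow> Z i \<in> borel_measurable M"
    using indep by (auto simp: indep_vars_def)
  have mJ[measurable]: "(\<lambda>\<omega>. \<Sum>i\<in>J. f (Z i \<omega>)) \<in> borel_measurable M"
    using meas J f by (intro borel_measurable_sum) (auto intro: measurable_compose)
  have "{\<omega>\<in>space M. t \<le> (\<Sum>i\<in>J. f (Z i \<omega>))} \<in> sets M"
    by measurable
  then have "prob A \<le> prob {\<omega>\<in>space M. t \<le> (\<Sum>i\<in>J. f (Z i \<omega>))}"
    using A by (rule finite_measure_mono[rotated])
  also have "\<dots> \<le> (enn2real (\<integral>\<^sup>+\<omega>. ennreal (exp (f (Z 1 \<omega>))) \<partial>M)) ^ card J * exp (-t)"
    by (rule cheb[OF indep ident f L J])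
  finally show ?thesis .
qed

end

theorem lemma2p1:
  fixes M :: "'s measure" and Z :: "nat \<Rightarrow> 's \<Rightarrow> 'a::euclidean_space"
    and \<phi> :: "nat \<Rightarrow> nat" and I :: "'a \<Rightarrow> ereal"
  assumes "prob_space M"
    and phi_pos: "\<forall>n>0. \<phi> n > 0"
    and phi_lim: "(\<lambda>n. real (\<phi> n) / real n) \<longlonglongrightarrow> 0"
    and indep: "prob_space.indep_vars M (\<lambda>_. borel) Z {1..}"
    and ident: "\<forall>i\<ge>1. distr M borel (Z i) = distr M borel (Z 1)"
    and A1_moment: "\<exists>\<alpha>>0. (\<integral>\<^sup>+ \<omega>. ennreal (exp (\<alpha> * norm (Z 1 \<omega>))) \<partial>M) < \<infinity>"
    and A1_good: "good_rate_function I"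
    and A1_LDP: "LDP (\<lambda>n. distr M borel (\<lambda>\<omega>. (1 / real n) *\<^sub>R Z 1 \<omega>)) I"
    and A2: "\<forall>z. I z = support_fun z (mgf_domain M (Z 1))"
  shows "good_rate_function I \<and>
         LDP (\<lambda>n. distr M borel (\<lambda>\<omega>. (1 / real n) *\<^sub>R (\<Sum>i=1..\<phi> n. Z i \<omega>))) I"
proof -
  interpret prob_space M by fact
  have meas: "\<And>i. 1 \<le> i \<Longrightarrow> Z i \<in> borel_measurable M"
    using indep by (auto simp: indep_vars_def)
  define S where "S n \<omega> = (\<Sum>i=1..\<phi> n. Z i \<omega>)" for n \<omega>
  define V where "V n \<omega> = (1 / real n) *\<^sub>R S n \<omega>" for n \<omega>
  define P where "P n A = prob (V n -` A \<inter> space M)" for n A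
  have mV: "V n \<in> borel_measurable M" for n
    unfolding V_def S_def using meas
    by (intro borel_measurable_scaleR borel_measurable_const borel_measurable_sum) auto
  have distrP: "measure (distr M borel (\<lambda>\<omega>. (1 / real n) *\<^sub>R (\<Sum>i=1..\<phi> n. Z i \<omega>))) A = P n A"
    if "A \<in> sets borel" for n A
  proof -
    have "(\<lambda>\<omega>. (1 / real n) *\<^sub>R (\<Sum>i=1..\<phi> n. Z i \<omega>)) = V n" by (auto simp: V_def S_def)
    then show ?thesis using measure_distr[OF mV that] by (simp add: P_def)
  qed
  obtain \<alpha> where \<alpha>: "\<alpha> > 0" and Cfin: "(\<integral>\<^sup>+\<omega>. ennreal (exp (\<alpha> * norm (Z 1 \<omega>))) \<partial>M) < \<infinity>"
    using A1_moment by blast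
  define C where "C = max 1 (enn2real (\<integral>\<^sup>+\<omega>. ennreal (exp (\<alpha> * norm (Z 1 \<omega>))) \<partial>M))"
  have C1: "C \<ge> 1" by (simp add: C_def)
  have tailS: "\<exists>R. eventually (\<lambda>n. P n {x. R \<le> norm x} \<le> exp (- (real n * c))) sequentially" for c
  proof -
    define R where "R = \<bar>c + 1\<bar> / \<alpha>"
    have ev: "eventually (\<lambda>n. C ^ \<phi> n \<le> exp (real n * 1)) sequentially"
      by (rule growth[OF phi_lim C1]) simp
    have "eventually (\<lambda>n. P n {x. R \<le> norm x} \<le> exp (- (real n * c))) sequentially"
      using ev eventually_gt_at_top[of "0::nat"]
    proof eventually_elim
      case (elim n)
      define t where "t = real n * (c + 1)"
      have sub: "V n -` {x. R \<le> norm x} \<inter> space M \<subseteq>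
          {\<omega>\<in>space M. t \<le> (\<Sum>i\<in>{1..\<phi> n}. \<alpha> * norm (Z i \<omega>))}"
      proof
        fix \<omega> assume om: "\<omega> \<in> V n -` {x. R \<le> norm x} \<inter> space M"
        then have "R \<le> norm (S n \<omega>) / real n" by (simp add: V_def)
        then have "R * real n \<le> norm (S n \<omega>)" using elim by (simp add: pos_le_divide_eq)
        also have "norm (S n \<omega>) \<le> (\<Sum>i\<in>{1..\<phi> n}. norm (Z i \<omega>))" unfolding S_def by (rule norm_sum)
        finally have "\<alpha> * (R * real n) \<le> \<alpha> * (\<Sum>i\<in>{1..\<phi> n}. norm (Z i \<omega>))"
          using \<alpha> by (intro mult_left_mono) auto
        moreover have "t \<le> \<alpha> * (R * real n)"
        proof -
          have e: "\<alpha> * (R * real n) = real n * \<bar>c + 1\<bar>" using \<alpha> by (simp add: R_def)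
          have "real n * (c + 1) \<le> real n * \<bar>c + 1\<bar>" by (intro mult_left_mono) auto
          then show ?thesis unfolding t_def using e by linarith
        qed
        ultimately have "t \<le> (\<Sum>i\<in>{1..\<phi> n}. \<alpha> * norm (Z i \<omega>))"
          by (simp add: sum_distrib_left)
        then show "\<omega> \<in> {\<omega>\<in>space M. t \<le> (\<Sum>i\<in>{1..\<phi> n}. \<alpha> * norm (Z i \<omega>))}"
          using om by simp
      qed
      have "P n {x. R \<le> norm x} \<le> (enn2real (\<integral>\<^sup>+\<omega>. ennreal (exp (\<alpha> * norm (Z 1 \<omega>))) \<partial>M)) ^ card {1..\<phi> n} * exp (-t)"
        unfolding P_def
        by (rule cheb2[OF indep ident _ Cfin _ _ sub]) auto
      also have "\<dots> \<le> C ^ \<phi> n * exp (-t)"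
        by (auto simp: C_def intro!: mult_right_mono power_mono)
      also have "\<dots> \<le> exp (real n * 1) * exp (-t)"
        using elim by (intro mult_right_mono) auto
      also have "\<dots> = exp (- (real n * c))"
        by (simp add: t_def exp_add[symmetric] algebra_simps)
      finally show ?case .
    qed
    then show ?thesis by blast
  qed
  have ballS: "\<exists>\<delta>>0. eventually (\<lambda>n. P n (ball y \<delta>) \<le> exp (- (real n * c))) sequentially"
    if "ereal c < I y" for y c
  proof -
    have "ereal c < support_fun y (mgf_domain M (Z 1))" using that A2 by simp
    then obtain \<theta> where \<theta>D: "\<theta> \<in> mgf_domain M (Z 1)" and c\<theta>: "c < y \<bullet> \<theta>"
      by (auto simp: support_fun_def less_SUP_iff)
    have Lfin: "(\<integral>\<^sup>+\<omega>. ennreal (exp (\<theta> \<bullet> Z 1 \<omega>)) \<partial>M) < \<infinity>"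
      using \<theta>D by (simp add: mgf_domain_def)
    define \<eta> where "\<eta> = y \<bullet> \<theta> - c"
    have \<eta>: "\<eta> > 0" using c\<theta> by (simp add: \<eta>_def)
    define \<delta> where "\<delta> = \<eta> / (4 * (norm \<theta> + 1))"
    have "4 * (norm \<theta> + 1) > (0::real)" by (smt (verit) norm_ge_zero)
    then have \<delta>: "\<delta> > 0" using \<eta> unfolding \<delta>_def by (intro divide_pos_pos)
    have \<delta>\<theta>: "norm \<theta> * \<delta> \<le> \<eta> / 4"
    proof -
      have "norm \<theta> * \<delta> = (\<eta> / 4) * (norm \<theta> / (norm \<theta> + 1))"
        by (simp add: \<delta>_def field_simps)
      also have "\<dots> \<le> (\<eta> / 4) * 1"
      proof (intro mult_left_mono)
        have p: "norm \<theta> + 1 > 0" by (smt (verit) norm_ge_zero)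
        then show "norm \<theta> / (norm \<theta> + 1) \<le> 1" by (simp add: pos_divide_le_eq)
      qed (use \<eta> in auto)
      finally show ?thesis by simp
    qed
    define K where "K = max 1 (enn2real (\<integral>\<^sup>+\<omega>. ennreal (exp (\<theta> \<bullet> Z 1 \<omega>)) \<partial>M))"
    have K1: "K \<ge> 1" by (simp add: K_def)
    have ev: "eventually (\<lambda>n. K ^ \<phi> n \<le> exp (real n * (\<eta> / 2))) sequentially"
      by (rule growth[OF phi_lim K1]) (use \<eta> in simp)
    have fm: "(\<lambda>z. \<theta> \<bullet> z) \<in> borel_measurable borel"
      by (intro borel_measurable_inner) auto
    have "eventually (\<lambda>n. P n (ball y \<delta>) \<le> exp (- (real n * c))) sequentially"
      using ev eventually_gt_at_top[of "0::nat"]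
    proof eventually_elim
      case (elim n)
      define t where "t = real n * (c + 3 * \<eta> / 4)"
      have sub: "V n -` ball y \<delta> \<inter> space M \<subseteq> {\<omega>\<in>space M. t \<le> (\<Sum>i\<in>{1..\<phi> n}. \<theta> \<bullet> Z i \<omega>)}"
      proof
        fix \<omega> assume om: "\<omega> \<in> V n -` ball y \<delta> \<inter> space M"
        then have d: "norm (V n \<omega> - y) < \<delta>" by (simp add: dist_norm norm_minus_commute)
        have "\<bar>\<theta> \<bullet> (V n \<omega> - y)\<bar> \<le> norm \<theta> * norm (V n \<omega> - y)" by (rule Cauchy_Schwarz_ineq2)
        also have "\<dots> \<le> norm \<theta> * \<delta>" using d by (intro mult_left_mono) auto
        also have "\<dots> \<le> \<eta> / 4" by (rule \<delta>\<theta>)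
        finally have "\<bar>\<theta> \<bullet> V n \<omega> - \<theta> \<bullet> y\<bar> \<le> \<eta> / 4" by (simp add: inner_diff_right)
        then have a: "- (\<eta> / 4) \<le> \<theta> \<bullet> V n \<omega> - \<theta> \<bullet> y" by (simp only: abs_le_iff) linarith
        have b: "\<theta> \<bullet> y = c + \<eta>" by (simp add: \<eta>_def inner_commute)
        have "\<theta> \<bullet> V n \<omega> \<ge> c + 3 * \<eta> / 4"
          using a b by linarith
        moreover have "\<theta> \<bullet> V n \<omega> = (\<Sum>i\<in>{1..\<phi> n}. \<theta> \<bullet> Z i \<omega>) / real n"
          by (simp add: V_def S_def inner_sum_right)
        ultimately have "c + 3 * \<eta> / 4 \<le> (\<Sum>i\<in>{1..\<phi> n}. \<theta> \<bullet> Z i \<omega>) / real n" by simp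
        then have "t \<le> (\<Sum>i\<in>{1..\<phi> n}. \<theta> \<bullet> Z i \<omega>)"
          using elim by (simp add: t_def pos_le_divide_eq mult.commute)
        then show "\<omega> \<in> {\<omega>\<in>space M. t \<le> (\<Sum>i\<in>{1..\<phi> n}. \<theta> \<bullet> Z i \<omega>)}"
          using om by simp
      qed
      have "P n (ball y \<delta>) \<le> (enn2real (\<integral>\<^sup>+\<omega>. ennreal (exp (\<theta> \<bullet> Z 1 \<omega>)) \<partial>M)) ^ card {1..\<phi> n} * exp (-t)"
        unfolding P_def
        by (rule cheb2[where f="\<lambda>z. \<theta> \<bullet> z", OF indep ident fm Lfin _ _ sub]) auto
      also have "\<dots> \<le> K ^ \<phi> n * exp (-t)"
        by (auto simp: K_def intro!: mult_right_mono power_mono)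
      also have "\<dots> \<le> exp (real n * (\<eta> / 2)) * exp (-t)"
        using elim by (intro mult_right_mono) auto
      also have "\<dots> = exp (- (real n * (c + \<eta> / 4)))"
        by (simp add: t_def exp_add[symmetric] algebra_simps)
      also have "\<dots> \<le> exp (- (real n * c))"
        using \<eta> by (simp add: algebra_simps)
      finally show ?case .
    qed
    then show ?thesis using \<delta> by blast
  qed
  have closedS: "eventually (\<lambda>n. P n F \<le> exp (- (real n * c))) sequentially"
    if Fcl: "closed F" and Fc: "ereal c < (INF x\<in>F. I x)" for F c
  proof -
    obtain c1 where c1a: "ereal c < ereal c1" and c1b: "ereal c1 < (INF x\<in>F. I x)"
      using ereal_dense2[OF Fc] by blast
    have Fc1: "ereal c1 < I y" if "y \<in> F" for y
      using c1b INF_lower[OF that, of I] by (rule less_le_trans)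
    obtain R where R: "eventually (\<lambda>n. P n {x. R \<le> norm x} \<le> exp (- (real n * c1))) sequentially"
      using tailS by blast
    define K where "K = F \<inter> cball 0 R"
    have Kc: "compact K" unfolding K_def using Fcl by (intro closed_Int_compact) auto
    have "\<forall>y\<in>K. \<exists>\<delta>>0. eventually (\<lambda>n. P n (ball y \<delta>) \<le> exp (- (real n * c1))) sequentially"
      using ballS Fc1 by (auto simp: K_def)
    then obtain d where d: "\<forall>y\<in>K. d y > 0 \<and> eventually (\<lambda>n. P n (ball y (d y)) \<le> exp (- (real n * c1))) sequentially"
      by metis
    have "K \<subseteq> (\<Union>y\<in>K. ball y (d y))" using d by auto
    then obtain Y where Y: "Y \<subseteq> K" "finite Y" "K \<subseteq> (\<Union>y\<in>Y. ball y (d y))"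
      using compactE_image[OF Kc, of K "\<lambda>y. ball y (d y)"] by auto
    have evY: "eventually (\<lambda>n. \<forall>y\<in>Y. P n (ball y (d y)) \<le> exp (- (real n * c1))) sequentially"
      using Y d by (auto intro!: eventually_ball_finite)
    have dom: "eventually (\<lambda>n. (real (card Y) + 1) * exp (- (real n * c1)) \<le> exp (- (real n * c))) sequentially"
      using c1a by (intro expdom) simp
    have tailB: "{x::'a. R \<le> norm x} \<in> sets borel" by measurable
    show ?thesis using R evY dom
    proof eventually_elim
      case (elim n)
      have mset: "V n -` B \<inter> space M \<in> sets M" if "B \<in> sets borel" for B
        using measurable_sets[OF mV that] .
      let ?T = "V n -` {x. R \<le> norm x} \<inter> space M"
      let ?U = "(\<Union>y\<in>Y. V n -` ball y (d y) \<inter> space M)"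
      have cover: "V n -` F \<inter> space M \<subseteq> ?T \<union> ?U"
      proof
        fix \<omega> assume om: "\<omega> \<in> V n -` F \<inter> space M"
        show "\<omega> \<in> ?T \<union> ?U"
        proof (cases "R \<le> norm (V n \<omega>)")
          case True then show ?thesis using om by auto
        next
          case False then have "V n \<omega> \<in> K" using om by (auto simp: K_def)
          then obtain y where "y \<in> Y" "V n \<omega> \<in> ball y (d y)" using Y(3) by auto
          then show ?thesis using om by auto
        qed
      qed
      have UT: "?T \<in> sets M" by (rule mset[OF tailB])
      have UU: "?U \<in> sets M" using Y(2) by (intro sets.finite_UN mset) auto
      have "P n F \<le> prob (?T \<union> ?U)"
        unfolding P_def using UT UU by (intro finite_measure_mono[OF cover]) auto
      also have "\<dots> \<le> prob ?T + prob ?U"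
        using UT UU by (rule measure_Un_le)
      also have "prob ?U \<le> (\<Sum>y\<in>Y. prob (V n -` ball y (d y) \<inter> space M))"
        using Y(2) by (intro finite_measure_subadditive_finite) (auto intro!: mset)
      also have "\<dots> \<le> (\<Sum>y\<in>Y. exp (- (real n * c1)))"
        using elim(2) by (intro sum_mono) (auto simp: P_def)
      also have "prob ?T \<le> exp (- (real n * c1))"
        using elim(1) by (simp add: P_def)
      finally have "P n F \<le> (real (card Y) + 1) * exp (- (real n * c1))"
        by (simp add: algebra_simps)
      then show ?case using elim(3) by linarith
    qed
  qed
  have openS: "eventually (\<lambda>n. exp (- (real n * c)) \<le> P n G) sequentially"
    if Gop: "open G" and yG: "y \<in> G" and Iy: "I y < ereal c" for G y c
  proof -
    obtain e where e: "e > 0" "ball y e \<subseteq> G" using Gop yG open_contains_ball by blast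
    define \<delta> where "\<delta> = e / 2"
    have \<delta>: "\<delta> > 0" using e by (simp add: \<delta>_def)
    obtain c' where c'a: "I y < ereal c'" and c'b: "ereal c' < ereal c"
      using ereal_dense2[OF Iy] by blast
    have cc: "c' < c" using c'b by simp
    define Q where "Q n = prob ((\<lambda>\<omega>. (1 / real n) *\<^sub>R Z 1 \<omega>) -` ball y \<delta> \<inter> space M)" for n
    have mZ1: "(\<lambda>\<omega>. (1 / real n) *\<^sub>R Z 1 \<omega>) \<in> borel_measurable M" for n
      using meas[of 1] by (intro borel_measurable_scaleR borel_measurable_const) auto
    have lbZ: "- (INF x\<in>ball y \<delta>. I x) \<le> liminf (\<lambda>n. ereal (1 / real n) * eln (Q n))"
    proof -
      have "- (INF x\<in>ball y \<delta>. I x) \<le> liminf (\<lambda>n. ereal (1 / real n) *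
          eln (measure (distr M borel (\<lambda>\<omega>. (1 / real n) *\<^sub>R Z 1 \<omega>)) (ball y \<delta>)))"
        using A1_LDP unfolding LDP_def by auto
      moreover have "(\<lambda>n. ereal (1 / real n) *
          eln (measure (distr M borel (\<lambda>\<omega>. (1 / real n) *\<^sub>R Z 1 \<omega>)) (ball y \<delta>)))
          = (\<lambda>n. ereal (1 / real n) * eln (Q n))"
        by (intro ext, subst measure_distr[OF mZ1]) (auto simp: Q_def)
      ultimately show ?thesis by simp
    qed
    have "(INF x\<in>ball y \<delta>. I x) \<le> I y" using \<delta> by (intro INF_lower) auto
    then have "(INF x\<in>ball y \<delta>. I x) < ereal c'" using c'a by (rule le_less_trans)
    then have "- ereal c' < - (INF x\<in>ball y \<delta>. I x)" by (simp only: ereal_minus_less_minus)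
    then have "- ereal c' < liminf (\<lambda>n. ereal (1 / real n) * eln (Q n))"
      using lbZ by (rule less_le_trans)
    then have evQ: "eventually (\<lambda>n. - ereal c' < ereal (1 / real n) * eln (Q n)) sequentially"
      by (rule less_LiminfD)
    have evQ2: "eventually (\<lambda>n. exp (- (real n * c')) < Q n) sequentially"
      using evQ eventually_gt_at_top[of "0::nat"]
    proof eventually_elim
      case (elim n)
      show ?case
      proof (cases "Q n > 0")
        case True
        then have "- c' < ln (Q n) / real n" using elim(1) by (simp add: eln_def)
        then have "- (real n * c') < ln (Q n)" using elim(2) by (simp add: pos_less_divide_eq algebra_simps)
        then have "exp (- (real n * c')) < exp (ln (Q n))" by simp
        then show ?thesis using True by simp
      next
        case False then show ?thesis using elim by (simp add: eln_def)
      qed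
    qed
    define T where "T n \<omega> = (\<Sum>i\<in>{2..\<phi> n}. Z i \<omega>)" for n \<omega>
    have evT: "eventually (\<lambda>n. prob {\<omega>\<in>space M. real n * \<delta> \<le> norm (T n \<omega>)} \<le> 1 / 2) sequentially"
    proof -
      have g: "eventually (\<lambda>n. C ^ \<phi> n \<le> exp (real n * (\<alpha> * \<delta> / 2))) sequentially"
        by (rule growth[OF phi_lim C1]) (use \<alpha> \<delta> in simp)
      have dm: "eventually (\<lambda>n. 2 * exp (- (real n * (\<alpha> * \<delta> / 2))) \<le> exp (- (real n * 0))) sequentially"
        using \<alpha> \<delta> by (intro expdom) simp
      show ?thesis using g dm eventually_gt_at_top[of "0::nat"]
      proof eventually_elim
        case (elim n)
        define t where "t = \<alpha> * (real n * \<delta>)"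
        have sub: "{\<omega>\<in>space M. real n * \<delta> \<le> norm (T n \<omega>)} \<subseteq>
            {\<omega>\<in>space M. t \<le> (\<Sum>i\<in>{2..\<phi> n}. \<alpha> * norm (Z i \<omega>))}"
        proof
          fix \<omega> assume om: "\<omega> \<in> {\<omega>\<in>space M. real n * \<delta> \<le> norm (T n \<omega>)}"
          then have "real n * \<delta> \<le> norm (T n \<omega>)" by simp
          also have "norm (T n \<omega>) \<le> (\<Sum>i\<in>{2..\<phi> n}. norm (Z i \<omega>))" unfolding T_def by (rule norm_sum)
          finally have "t \<le> \<alpha> * (\<Sum>i\<in>{2..\<phi> n}. norm (Z i \<omega>))"
            unfolding t_def using \<alpha> by (intro mult_left_mono) auto
          then show "\<omega> \<in> {\<omega>\<in>space M. t \<le> (\<Sum>i\<in>{2..\<phi> n}. \<alpha> * norm (Z i \<omega>))}"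
            using om by (simp add: sum_distrib_left)
        qed
        have "prob {\<omega>\<in>space M. real n * \<delta> \<le> norm (T n \<omega>)}
            \<le> (enn2real (\<integral>\<^sup>+\<omega>. ennreal (exp (\<alpha> * norm (Z 1 \<omega>))) \<partial>M)) ^ card {2..\<phi> n} * exp (-t)"
          by (rule cheb2[OF indep ident _ Cfin _ _ sub]) auto
        also have "\<dots> \<le> C ^ card {2..\<phi> n} * exp (-t)"
          by (auto simp: C_def intro!: mult_right_mono power_mono)
        also have "\<dots> \<le> C ^ \<phi> n * exp (-t)"
          using C1 by (intro mult_right_mono power_increasing) auto
        also have "\<dots> \<le> exp (real n * (\<alpha> * \<delta> / 2)) * exp (-t)"
          using elim by (intro mult_right_mono) auto
        also have "\<dots> = exp (- (real n * (\<alpha> * \<delta> / 2)))"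
          by (simp add: t_def exp_add[symmetric] algebra_simps)
        also have "\<dots> \<le> 1 / 2" using elim(2) by simp
        finally show ?case .
      qed
    qed
    have indepT: "indep_var borel (\<lambda>\<omega>. (1 / real n) *\<^sub>R Z 1 \<omega>) borel (\<lambda>\<omega>. (1 / real n) *\<^sub>R T n \<omega>)" for n
    proof -
      have iv: "indep_var (PiM {1} (\<lambda>_. borel)) (\<lambda>\<omega>. restrict (\<lambda>i. Z i \<omega>) {1})
          (PiM {2..\<phi> n} (\<lambda>_. borel)) (\<lambda>\<omega>. restrict (\<lambda>i. Z i \<omega>) {2..\<phi> n})"
        by (rule indep_var_restrict[OF indep]) auto
      have m1: "(\<lambda>x. (1 / real n) *\<^sub>R x 1) \<in> measurable (PiM {1::nat} (\<lambda>_. borel)) (borel :: 'a measure)"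
        by measurable
      have m2: "(\<lambda>x. (1 / real n) *\<^sub>R (\<Sum>i\<in>{2..\<phi> n}. x i)) \<in> measurable (PiM {2..\<phi> n} (\<lambda>_. borel)) (borel :: 'a measure)"
        by measurable
      have "indep_var borel ((\<lambda>x. (1 / real n) *\<^sub>R x 1) \<circ> (\<lambda>\<omega>. restrict (\<lambda>i. Z i \<omega>) {1}))
          borel ((\<lambda>x. (1 / real n) *\<^sub>R (\<Sum>i\<in>{2..\<phi> n}. x i)) \<circ> (\<lambda>\<omega>. restrict (\<lambda>i. Z i \<omega>) {2..\<phi> n}))"
        by (rule indep_var_compose[OF iv m1 m2])
      moreover have "((\<lambda>x. (1 / real n) *\<^sub>R x 1) \<circ> (\<lambda>\<omega>. restrict (\<lambda>i. Z i \<omega>) {1})) = (\<lambda>\<omega>. (1 / real n) *\<^sub>R Z 1 \<omega>)"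
        by (simp add: fun_eq_iff)
      moreover have "((\<lambda>x. (1 / real n) *\<^sub>R (\<Sum>i\<in>{2..\<phi> n}. x i)) \<circ> (\<lambda>\<omega>. restrict (\<lambda>i. Z i \<omega>) {2..\<phi> n})) = (\<lambda>\<omega>. (1 / real n) *\<^sub>R T n \<omega>)"
        by (simp add: fun_eq_iff T_def)
      ultimately show ?thesis by simp
    qed
    have dm2: "eventually (\<lambda>n. 2 * exp (- (real n * c)) \<le> exp (- (real n * c'))) sequentially"
      using cc by (intro expdom) simp
    show ?thesis using evQ2 evT dm2 eventually_gt_at_top[of "0::nat"]
    proof eventually_elim
      case (elim n)
      have phin: "\<phi> n \<ge> 1" using phi_pos elim(4) by (simp add: Suc_le_eq)
      define U where "U = (\<lambda>\<omega>. (1 / real n) *\<^sub>R Z 1 \<omega>)"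
      define W where "W = (\<lambda>\<omega>. (1 / real n) *\<^sub>R T n \<omega>)"
      have pr: "prob ((\<lambda>x. (U x, W x)) -` (ball y \<delta> \<times> ball 0 \<delta>) \<inter> space M)
          = prob (U -` ball y \<delta> \<inter> space M) * prob (W -` ball 0 \<delta> \<inter> space M)"
        unfolding U_def W_def by (rule indep_varD[OF indepT]) auto
      have mW: "W \<in> borel_measurable M"
        using indep_var_rv2[OF indepT[of n]] by (simp add: W_def)
      have "{\<omega>\<in>space M. \<delta> \<le> norm (W \<omega>)} \<in> sets M" using mW by measurable
      then have "prob (space M - {\<omega>\<in>space M. \<delta> \<le> norm (W \<omega>)}) = 1 - prob {\<omega>\<in>space M. \<delta> \<le> norm (W \<omega>)}"
        by (rule prob_compl)
      moreover have "space M - {\<omega>\<in>space M. \<delta> \<le> norm (W \<omega>)} = W -` ball 0 \<delta> \<inter> space M"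
        by auto
      moreover have "{\<omega>\<in>space M. \<delta> \<le> norm (W \<omega>)} = {\<omega>\<in>space M. real n * \<delta> \<le> norm (T n \<omega>)}"
        using elim(4) by (auto simp: W_def pos_le_divide_eq mult.commute)
      ultimately have PW: "prob (W -` ball 0 \<delta> \<inter> space M) \<ge> 1 / 2"
        using elim(2) by simp
      have incl: "(\<lambda>x. (U x, W x)) -` (ball y \<delta> \<times> ball 0 \<delta>) \<inter> space M \<subseteq> V n -` G \<inter> space M"
      proof
        fix \<omega> assume om: "\<omega> \<in> (\<lambda>x. (U x, W x)) -` (ball y \<delta> \<times> ball 0 \<delta>) \<inter> space M"
        then have d1: "dist y (U \<omega>) < \<delta>" and d3: "norm ((1 / real n) *\<^sub>R T n \<omega>) < \<delta>" and om': "\<omega> \<in> space M"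
          by (auto simp: W_def)
        have "S n \<omega> = Z 1 \<omega> + T n \<omega>"
          unfolding S_def T_def using phin by (simp add: sum.atLeast_Suc_atMost numeral_2_eq_2)
        then have Vn: "V n \<omega> = U \<omega> + (1 / real n) *\<^sub>R T n \<omega>"
          by (simp add: V_def U_def scaleR_add_right)
        have "dist y (V n \<omega>) \<le> dist y (U \<omega>) + norm ((1 / real n) *\<^sub>R T n \<omega>)"
          unfolding Vn by (metis dist_norm dist_triangle2 add_diff_cancel_left' dist_add_cancel norm_minus_commute)
        also have "\<dots> < \<delta> + \<delta>" using d1 d3 by (rule add_strict_mono)
        also have "\<delta> + \<delta> = e" by (simp add: \<delta>_def)
        finally have "V n \<omega> \<in> ball y e" by simp
        then show "\<omega> \<in> V n -` G \<inter> space M" using e(2) om' by auto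
      qed
      have "V n -` G \<inter> space M \<in> sets M"
        using measurable_sets[OF mV borel_open[OF Gop]] .
      then have "prob ((\<lambda>x. (U x, W x)) -` (ball y \<delta> \<times> ball 0 \<delta>) \<inter> space M) \<le> P n G"
        unfolding P_def using incl by (intro finite_measure_mono) auto
      then have "Q n * prob (W -` ball 0 \<delta> \<inter> space M) \<le> P n G"
        unfolding pr by (simp add: Q_def U_def)
      moreover have "exp (- (real n * c')) * (1 / 2) \<le> Q n * prob (W -` ball 0 \<delta> \<inter> space M)"
        using elim(1) PW by (intro mult_mono) (auto simp: Q_def)
      ultimately show ?case using elim(3) by linarith
    qed
  qed
  show ?thesis
    unfolding LDP_def
  proof (intro conjI allI impI A1_good)
    fix F :: "'a set" assume F: "closed F"
    have "limsup (\<lambda>n. ereal (1 / real n) * eln (P n F)) \<le> - (INF x\<in>F. I x)"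
      by (rule ub_conv) (rule closedS[OF F])
    moreover have "(\<lambda>n. ereal (1 / real n) * eln (P n F)) = (\<lambda>n. ereal (1 / real n) *
        eln (measure (distr M borel (\<lambda>\<omega>. (1 / real n) *\<^sub>R (\<Sum>i=1..\<phi> n. Z i \<omega>))) F))"
      by (intro ext, subst distrP) (use F in auto)
    ultimately show "limsup (\<lambda>n. ereal (1 / real n) *
        eln (measure (distr M borel (\<lambda>\<omega>. (1 / real n) *\<^sub>R (\<Sum>i=1..\<phi> n. Z i \<omega>))) F)) \<le> - (INF x\<in>F. I x)"
      by simp
  next
    fix G :: "'a set" assume G: "open G"
    have "- (INF x\<in>G. I x) \<le> liminf (\<lambda>n. ereal (1 / real n) * eln (P n G))"
    proof (rule lb_conv)
      fix c assume "(INF x\<in>G. I x) < ereal c"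
      then obtain y where "y \<in> G" "I y < ereal c" by (auto simp: INF_less_iff)
      then show "eventually (\<lambda>n. exp (- (real n * c)) \<le> P n G) sequentially"
        using openS[OF G] by blast
    qed
    moreover have "(\<lambda>n. ereal (1 / real n) * eln (P n G)) = (\<lambda>n. ereal (1 / real n) *
        eln (measure (distr M borel (\<lambda>\<omega>. (1 / real n) *\<^sub>R (\<Sum>i=1..\<phi> n. Z i \<omega>))) G))"
      by (intro ext, subst distrP) (use G in auto)
    ultimately show "- (INF x\<in>G. I x) \<le> liminf (\<lambda>n. ereal (1 / real n) *
        eln (measure (distr M borel (\<lambda>\<omega>. (1 / real n) *\<^sub>R (\<Sum>i=1..\<phi> n. Z i \<omega>))) G))"
      by simp
  qed
qed

end
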